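(* Let $T>0$, $\alpha>0$, $\beta>0$, $\sigma>0$, $u_1>0$, let $N$ be a positive integer and $R_0\in\mathbb R$, and let $\hat u$ be an optimal control for the problem $$\int_0^T\big(\alpha R(t)+\beta u(t)\big)\,dt\to\inf,\qquad \dot R(t)=-u(t)R(t)+N\sigma^2,\qquad R(0)=R_0,\qquad 0\le u(t)\le u_1 .$$ Then there exists $\varepsilon>0$ such that $\hat u(t)=0$ for all $t\in(T-\varepsilon,T)$.
   Context: Admissible controls are functions $u\in L^\infty[0,T]$ with $0\le u(t)\le u_1$ for a.e. $t$ (identified up to a.e. equality); the corresponding state $R$ is the absolutely continuous solution of $\dot R=-uR+N\sigma^2$, $R(0)=R_0$. An optimal control is an admissible control minimizing the integral functional. *)

theory Defs
  imports "HOL-Analysis.Analysis"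
begin

definition admissible :: "real \<Rightarrow> real \<Rightarrow> (real \<Rightarrow> real) \<Rightarrow> bool" where
  "admissible T u1 u \<longleftrightarrow>
     set_borel_measurable lborel {0..T} u \<and>
     (AE t in lborel. t \<in> {0..T} \<longrightarrow> 0 \<le> u t \<and> u t \<le> u1)"

text \<open>R is the absolutely continuous (Caratheodory) solution of
  R' = -u R + N sigma^2, R(0) = R0 on [0,T], written in integral form.\<close>
definition is_state :: "real \<Rightarrow> nat \<Rightarrow> real \<Rightarrow> real \<Rightarrow> (real \<Rightarrow> real) \<Rightarrow> (real \<Rightarrow> real) \<Rightarrow> bool" where
  "is_state T N \<sigma> R0 u R \<longleftrightarrow>
     continuous_on {0..T} R \<and> R 0 = R0 \<and>
     (\<forall>t\<in>{0..T}. R t = R0 + (LINT s:{0..t}|lborel. real N * \<sigma>\<^sup>2 - u s * R s))"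

definition cost :: "real \<Rightarrow> real \<Rightarrow> real \<Rightarrow> (real \<Rightarrow> real) \<Rightarrow> (real \<Rightarrow> real) \<Rightarrow> real" where
  "cost T \<alpha> \<beta> u R = (LINT t:{0..T}|lborel. \<alpha> * R t + \<beta> * u t)"

definition optimal_control ::
  "real \<Rightarrow> real \<Rightarrow> real \<Rightarrow> real \<Rightarrow> real \<Rightarrow> nat \<Rightarrow> real \<Rightarrow> (real \<Rightarrow> real) \<Rightarrow> bool" where
  "optimal_control T \<alpha> \<beta> \<sigma> u1 N R0 uh \<longleftrightarrow>
     admissible T u1 uh \<and> (\<exists>R. is_state T N \<sigma> R0 uh R) \<and>
     (\<forall>R v S. is_state T N \<sigma> R0 uh R \<longrightarrow> admissible T u1 v \<longrightarrow> is_state T N \<sigma> R0 v S \<longrightarrow>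
        cost T \<alpha> \<beta> uh R \<le> cost T \<alpha> \<beta> v S)"

end

theory Submission imports Defs begin

lemma cont_meas:
  fixes X :: "real \<Rightarrow> real"
  assumes "continuous_on {0..T} X"
  shows "set_borel_measurable lborel {0..T} X"
  unfolding set_borel_measurable_def
  using borel_measurable_continuous_on_indicator[OF _ assms] by simp

lemma int_prod:
  fixes w X :: "real \<Rightarrow> real"
  assumes mw: "set_borel_measurable lborel {0..T} w"
    and bw: "AE t in lborel. t \<in> {0..T} \<longrightarrow> 0 \<le> w t \<and> w t \<le> u1"
    and cX: "continuous_on {0..T} X"
  shows "set_integrable lborel {0..T} (\<lambda>s. w s * X s)"
proof -
  have "compact (X ` {0..T})" using cX by (intro compact_continuous_image) auto
  then obtain M where M: "M > 0" "\<forall>y\<in>X ` {0..T}. norm y \<le> M"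
    using compact_imp_bounded bounded_pos by metis
  have mX: "set_borel_measurable lborel {0..T} X" using cont_meas[OF cX] .
  have meas: "set_borel_measurable lborel {0..T} (\<lambda>s. w s * X s)"
  proof -
    have "(\<lambda>x. (indicator {0..T} x *\<^sub>R w x) * (indicator {0..T} x *\<^sub>R X x)) \<in> borel_measurable lborel"
      using mw mX unfolding set_borel_measurable_def by measurable
    moreover have "(\<lambda>x. (indicator {0..T} x *\<^sub>R w x) * (indicator {0..T} x *\<^sub>R X x)) =
        (\<lambda>x. indicator {0..T} x *\<^sub>R (w x * X x))"
      by (auto simp: indicator_def)
    ultimately show ?thesis unfolding set_borel_measurable_def by simp
  qed
  have intc: "set_integrable lborel {0..T} (\<lambda>_. u1 * M)"
    using borel_integrable_atLeastAtMost'[of 0 T "\<lambda>_. u1 * M"] by simp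
  have ae: "AE x in lborel. x \<in> {0..T} \<longrightarrow> norm (w x * X x) \<le> norm (u1 * M)"
    using bw
  proof eventually_elim
    case (elim x)
    show ?case
    proof
      assume x: "x \<in> {0..T}"
      then have "\<bar>X x\<bar> \<le> M" using M by auto
      moreover have "0 \<le> w x" "w x \<le> u1" using elim x by auto
      ultimately have "\<bar>w x * X x\<bar> \<le> u1 * M"
        by (simp add: abs_mult mult_mono)
      moreover have "u1 * M = \<bar>u1 * M\<bar>" using \<open>0 \<le> w x\<close> \<open>w x \<le> u1\<close> M by simp
      ultimately show "norm (w x * X x) \<le> norm (u1 * M)" by simp
    qed
  qed
  show ?thesis by (rule set_integrable_bound[OF intc meas ae])
qed

lemma split_int:
  fixes f :: "real \<Rightarrow> real"
  assumes "set_integrable lborel {0..T} f" "0 \<le> a" "a \<le> t" "t \<le> T"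
  shows "(LINT s:{0..t}|lborel. f s) = (LINT s:{0..a}|lborel. f s) + (LINT s:{a<..t}|lborel. f s)"
proof -
  have e: "{0..t} = {0..a} \<union> {a<..t}" using assms by auto
  have "set_integrable lborel {0..a} f" "set_integrable lborel {a<..t} f"
    using assms by (auto intro: set_integrable_subset)
  then show ?thesis unfolding e by (intro set_integral_Un) auto
qed


theorem lemma3:
  fixes T \<alpha> \<beta> \<sigma> u1 R0 :: real and N :: nat and uh :: "real \<Rightarrow> real"
  assumes "T > 0" "\<alpha> > 0" "\<beta> > 0" "\<sigma> > 0" "u1 > 0" "N > 0"
    and "optimal_control T \<alpha> \<beta> \<sigma> u1 N R0 uh"
  shows "\<exists>\<epsilon>>0. \<epsilon> \<le> T \<and> (AE t in lborel. t \<in> {T - \<epsilon><..<T} \<longrightarrow> uh t = 0)"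
proof -
  note opt = assms(7)[unfolded optimal_control_def]
  obtain R where Rst: "is_state T N \<sigma> R0 uh R" using opt by blast
  have mu: "set_borel_measurable lborel {0..T} uh"
    and bu: "AE t in lborel. t \<in> {0..T} \<longrightarrow> 0 \<le> uh t \<and> uh t \<le> u1"
    using opt unfolding admissible_def by auto
  have cR: "continuous_on {0..T} R" and R00: "R 0 = R0"
    and Req: "\<And>t. t \<in> {0..T} \<Longrightarrow> R t = R0 + (LINT s:{0..t}|lborel. real N * \<sigma>\<^sup>2 - uh s * R s)"
    using Rst unfolding is_state_def by auto
  have "compact (R ` {0..T})" using cR by (intro compact_continuous_image) auto
  then obtain M where M: "M > 0" "\<forall>y\<in>R ` {0..T}. norm y \<le> M"
    using compact_imp_bounded bounded_pos by metis
  have RM: "\<And>t. t \<in> {0..T} \<Longrightarrow> \<bar>R t\<bar> \<le> M" using M by auto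
  define c where "c = real N * \<sigma>\<^sup>2"
  define \<epsilon> where "\<epsilon> = min T (\<beta> / (2 * \<alpha> * M))"
  have ep: "\<epsilon> > 0" "\<epsilon> \<le> T" using assms M by (auto simp: \<epsilon>_def)
  have epb: "\<alpha> * M * \<epsilon> \<le> \<beta> / 2"
  proof -
    have "\<epsilon> \<le> \<beta> / (2 * \<alpha> * M)" by (simp add: \<epsilon>_def)
    then have "\<alpha> * M * \<epsilon> \<le> \<alpha> * M * (\<beta> / (2 * \<alpha> * M))"
      using assms M by (intro mult_left_mono) auto
    also have "\<dots> = \<beta> / 2" using assms M by (simp add: field_simps)
    finally show ?thesis .
  qed
  define a where "a = T - \<epsilon>"
  have a: "0 \<le> a" "a < T" using ep by (auto simp: a_def)
  define v where "v s = (if s \<le> a then uh s else 0)" for s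
  define S where "S t = (if t \<le> a then R t else R a + c * (t - a))" for t
  have mv: "set_borel_measurable lborel {0..T} v"
  proof -
    have "(\<lambda>x. indicator {..a} x * (indicator {0..T} x *\<^sub>R uh x)) \<in> borel_measurable lborel"
      using mu unfolding set_borel_measurable_def by measurable
    moreover have "(\<lambda>x. indicator {..a} x * (indicator {0..T} x *\<^sub>R uh x)) = (\<lambda>x. indicator {0..T} x *\<^sub>R v x)"
      by (auto simp: indicator_def v_def)
    ultimately show ?thesis unfolding set_borel_measurable_def by simp
  qed
  have bv: "AE t in lborel. t \<in> {0..T} \<longrightarrow> 0 \<le> v t \<and> v t \<le> u1"
    using bu by eventually_elim (use assms in \<open>auto simp: v_def\<close>)
  have admv: "admissible T u1 v" unfolding admissible_def using mv bv by auto
  have cS: "continuous_on {0..T} S"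
    unfolding S_def
  proof (rule continuous_on_cases_le)
    show "continuous_on {x \<in> {0..T}. x \<le> a} R" by (rule continuous_on_subset[OF cR]) auto
    show "continuous_on {x \<in> {0..T}. a \<le> x} (\<lambda>t. R a + c * (t - a))" by (intro continuous_intros)
  qed (auto intro: continuous_intros)
  have iF: "set_integrable lborel {0..T} (\<lambda>s. c - uh s * R s)"
    using int_prod[OF mu bu cR] borel_integrable_atLeastAtMost'[of 0 T "\<lambda>_. c"] by auto
  have iG: "set_integrable lborel {0..T} (\<lambda>s. c - v s * S s)"
    using int_prod[OF mv bv cS] borel_integrable_atLeastAtMost'[of 0 T "\<lambda>_. c"] by auto
  have Ra: "R a = R0 + (LINT s:{0..a}|lborel. c - uh s * R s)" using Req[of a] a by (simp add: c_def)
  have Sst: "is_state T N \<sigma> R0 v S"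
    unfolding is_state_def
  proof (intro conjI ballI)
    show "continuous_on {0..T} S" by fact
    show "S 0 = R0" using a R00 by (simp add: S_def)
    fix t assume t: "t \<in> {0..T}"
    show "S t = R0 + (LINT s:{0..t}|lborel. real N * \<sigma>\<^sup>2 - v s * S s)"
    proof (cases "t \<le> a")
      case True
      have "(LINT s:{0..t}|lborel. c - v s * S s) = (LINT s:{0..t}|lborel. c - uh s * R s)"
        using True by (intro set_lebesgue_integral_cong) (auto simp: v_def S_def)
      then show ?thesis using Req[OF t] True by (simp add: S_def c_def)
    next
      case False
      have "(LINT s:{0..t}|lborel. c - v s * S s) = (LINT s:{0..a}|lborel. c - v s * S s) + (LINT s:{a<..t}|lborel. c - v s * S s)"
        by (rule split_int[OF iG a(1)]) (use False t in auto)
      also have "(LINT s:{0..a}|lborel. c - v s * S s) = (LINT s:{0..a}|lborel. c - uh s * R s)"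
        by (rule set_lebesgue_integral_cong) (auto simp: v_def S_def)
      also have "(LINT s:{a<..t}|lborel. c - v s * S s) = (LINT s:{a<..t}|lborel. c)"
        by (rule set_lebesgue_integral_cong) (auto simp: v_def)
      also have "\<dots> = (t - a) * c" using False by (simp add: set_integral_const)
      finally have "(LINT s:{0..t}|lborel. c - v s * S s) = (LINT s:{0..a}|lborel. c - uh s * R s) + (t - a) * c" .
      then show ?thesis using Ra False unfolding c_def S_def by simp
    qed
  qed
  have copt: "cost T \<alpha> \<beta> uh R \<le> cost T \<alpha> \<beta> v S" using opt Rst admv Sst by blast
  have iu: "set_integrable lborel {0..T} uh" using int_prod[OF mu bu, of "\<lambda>_. 1"] by simp
  have iv: "set_integrable lborel {0..T} v" using int_prod[OF mv bv, of "\<lambda>_. 1"] by simp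
  have iuR: "set_integrable lborel {0..T} (\<lambda>s. uh s * R s)" using int_prod[OF mu bu cR] .
  have iR: "set_integrable lborel {0..T} R" using borel_integrable_atLeastAtMost'[OF cR] .
  have iS: "set_integrable lborel {0..T} S" using borel_integrable_atLeastAtMost'[OF cS] .
  have ic: "set_integrable lborel A (\<lambda>_. k::real)" if "A \<subseteq> {0..T}" "A \<in> sets lborel" for A k
    using borel_integrable_atLeastAtMost'[of 0 T "\<lambda>_. k"] that by (auto intro: set_integrable_subset)
  define H0 where "H0 s = \<alpha> * R s + \<beta> * uh s" for s
  define H1 where "H1 s = \<alpha> * S s + \<beta> * v s" for s
  have iH0: "set_integrable lborel {0..T} H0" unfolding H0_def using iR iu by auto
  have iH1: "set_integrable lborel {0..T} H1" unfolding H1_def using iS iv by auto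
  have sub: "{a<..T} \<subseteq> {0..T}" using a by auto
  have iH0': "set_integrable lborel {a<..T} H0" using set_integrable_subset[OF iH0 _ sub] by simp
  have iH1': "set_integrable lborel {a<..T} H1" using set_integrable_subset[OF iH1 _ sub] by simp
  have iu': "set_integrable lborel {a<..T} uh" using set_integrable_subset[OF iu _ sub] by simp
  have c0: "cost T \<alpha> \<beta> uh R = (LINT s:{0..a}|lborel. H0 s) + (LINT s:{a<..T}|lborel. H0 s)"
    unfolding cost_def H0_def[symmetric] by (rule split_int[OF iH0 a(1)]) (use a in auto)
  have c1: "cost T \<alpha> \<beta> v S = (LINT s:{0..a}|lborel. H1 s) + (LINT s:{a<..T}|lborel. H1 s)"
    unfolding cost_def H1_def[symmetric] by (rule split_int[OF iH1 a(1)]) (use a in auto)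
  have c01: "(LINT s:{0..a}|lborel. H1 s) = (LINT s:{0..a}|lborel. H0 s)"
    by (rule set_lebesgue_integral_cong) (auto simp: H0_def H1_def v_def S_def)
  define J where "J s = (LINT x:{a<..s}|lborel. uh x * R x)" for s
  define I where "I = (LINT x:{a<..T}|lborel. uh x)"
  have Rs: "R s = R a + c * (s - a) - J s" if s: "s \<in> {a<..T}" for s
  proof -
    have s0: "s \<in> {0..T}" using s a by auto
    have sub2: "{a<..s} \<subseteq> {0..T}" using s a by auto
    have "(LINT x:{0..s}|lborel. c - uh x * R x) = (LINT x:{0..a}|lborel. c - uh x * R x) + (LINT x:{a<..s}|lborel. c - uh x * R x)"
      by (rule split_int[OF iF a(1)]) (use s in auto)
    also have "(LINT x:{a<..s}|lborel. c - uh x * R x) = (LINT x:{a<..s}|lborel. c) - J s"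
      unfolding J_def
      by (rule set_integral_diff(2)[OF ic[OF sub2] set_integrable_subset[OF iuR _ sub2]]) auto
    also have "(LINT x:{a<..s}|lborel. c) = c * (s - a)" using s by (simp add: set_integral_const)
    finally show ?thesis using Req[OF s0] Ra by (simp add: c_def)
  qed
  have I0: "I \<ge> 0"
    unfolding I_def set_lebesgue_integral_def
    by (rule integral_nonneg_AE, rule eventually_mono[OF bu]) (use sub in \<open>auto simp: indicator_def\<close>)
  have JM: "J s \<le> M * I" if s: "s \<in> {a<..T}" for s
  proof -
    have sub2: "{a<..s} \<subseteq> {0..T}" using s a by auto
    have "J s \<le> (LINT x:{a<..T}|lborel. uh x * M)"
      unfolding J_def set_lebesgue_integral_def
    proof (rule integral_mono_AE)
      show "integrable lborel (\<lambda>x. indicat_real {a<..s} x *\<^sub>R (uh x * R x))"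
        using set_integrable_subset[OF iuR _ sub2] unfolding set_integrable_def by simp
      show "integrable lborel (\<lambda>x. indicat_real {a<..T} x *\<^sub>R (uh x * M))"
        using iu' unfolding set_integrable_def by (simp add: mult.assoc[symmetric])
      show "AE x in lborel. indicat_real {a<..s} x *\<^sub>R (uh x * R x) \<le> indicat_real {a<..T} x *\<^sub>R (uh x * M)"
        using bu
      proof eventually_elim
        case (elim x)
        show ?case
        proof (cases "x \<in> {a<..T}")
          case True
          then have x0: "x \<in> {0..T}" using a by auto
          have u0: "0 \<le> uh x" using elim x0 by auto
          have "uh x * R x \<le> uh x * M"
            using RM[OF x0] u0 by (intro mult_left_mono) auto
          moreover have "0 \<le> uh x * M" using u0 M by simp
          ultimately show ?thesis using True s by (auto simp: indicator_def)
        next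
          case False
          then have "x \<notin> {a<..s}" using s by auto
          then show ?thesis using False by simp
        qed
      qed
    qed
    also have "\<dots> = M * I" unfolding I_def by simp
    finally show ?thesis .
  qed
  have diffeq: "cost T \<alpha> \<beta> v S - cost T \<alpha> \<beta> uh R = (LINT s:{a<..T}|lborel. H1 s - H0 s)"
    using c0 c1 c01 set_integral_diff(2)[OF iH1' iH0'] by simp
  have HJ: "H1 s - H0 s = \<alpha> * J s - \<beta> * uh s" if "s \<in> {a<..T}" for s
  proof -
    have e: "S s - R s = J s" using Rs[OF that] that by (simp add: S_def)
    have "H1 s - H0 s = \<alpha> * (S s - R s) - \<beta> * uh s"
      using that by (simp add: H0_def H1_def v_def algebra_simps)
    then show ?thesis using e by simp
  qed
  have iD: "set_integrable lborel {a<..T} (\<lambda>s. H1 s - H0 s)" using iH1' iH0' by auto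
  have iD2: "set_integrable lborel {a<..T} (\<lambda>s. \<alpha> * J s - \<beta> * uh s)"
    using iD HJ by (subst set_integrable_cong[where f'="\<lambda>s. H1 s - H0 s"]) auto
  have "(LINT s:{a<..T}|lborel. H1 s - H0 s) = (LINT s:{a<..T}|lborel. \<alpha> * J s - \<beta> * uh s)"
    using HJ by (intro set_lebesgue_integral_cong) auto
  also have "\<dots> \<le> (LINT s:{a<..T}|lborel. \<alpha> * (M * I) - \<beta> * uh s)"
  proof (rule set_integral_mono[OF iD2])
    show "set_integrable lborel {a<..T} (\<lambda>s. \<alpha> * (M * I) - \<beta> * uh s)"
      using ic[OF sub] iu' by auto
    fix s assume "s \<in> {a<..T}"
    then show "\<alpha> * J s - \<beta> * uh s \<le> \<alpha> * (M * I) - \<beta> * uh s"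
      using JM assms by auto
  qed
  also have "\<dots> = (LINT s:{a<..T}|lborel. \<alpha> * (M * I)) - \<beta> * I"
    unfolding I_def using set_integral_diff(2)[OF ic[OF sub] set_integrable_mult_right[OF iu', of \<beta>]] by simp
  also have "(LINT s:{a<..T}|lborel. \<alpha> * (M * I)) = (T - a) * (\<alpha> * (M * I))"
    using a by (simp add: set_integral_const)
  also have "T - a = \<epsilon>" by (simp add: a_def)
  finally have "cost T \<alpha> \<beta> v S - cost T \<alpha> \<beta> uh R \<le> (\<alpha> * M * \<epsilon> - \<beta>) * I"
    using diffeq by (simp add: algebra_simps)
  also have "\<dots> \<le> (- \<beta> / 2) * I" using epb I0 by (intro mult_right_mono) auto
  finally have "(- \<beta> / 2) * I \<ge> 0" using copt by simp
  then have "I = 0" using I0 assms by (simp add: mult_le_0_iff)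
  then have "AE x in lborel. indicator {a<..T} x *\<^sub>R uh x = 0"
    unfolding I_def set_lebesgue_integral_def
    by (subst (asm) integral_nonneg_eq_0_iff_AE)
       (use iu' bu sub in \<open>auto simp: set_integrable_def indicator_def elim!: eventually_mono\<close>)
  then have "AE t in lborel. t \<in> {T - \<epsilon><..<T} \<longrightarrow> uh t = 0"
    by eventually_elim (auto simp: a_def indicator_def)
  then show ?thesis using ep by blast
qed

end
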